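(* Let $(\mathfrak{Q},\&,e)$ be a unital quantale and $p,q\in\mathfrak{Q}$. Then: (1) $\mathcal{D}\mathfrak{Q}(\bot,q)=\mathcal{D}\mathfrak{Q}(q,\bot)=\{\bot\}$; (2) $\mathcal{D}\mathfrak{Q}(e,e)=\mathfrak{Q}$; (3) $q\in\mathcal{D}\mathfrak{Q}(q,q)$; (4) $\bot\in\mathcal{D}\mathfrak{Q}(p,q)$; (5) $e\in\mathcal{D}\mathfrak{Q}(\top,\top)$ if and only if $\mathfrak{Q}$ is integral. Moreover, (6) $\mathfrak{Q}$ is integral if and only if $\mathcal{D}\mathfrak{Q}(p,q)\subseteq\{u\in\mathfrak{Q}\mid u\le p\wedge q\}$ for all $p,q\in\mathfrak{Q}$; (7) $\mathfrak{Q}$ is divisible if and only if $\mathcal{D}\mathfrak{Q}(p,q)=\{u\in\mathfrak{Q}\mid u\le p\wedge q\}$ for all $p,q\in\mathfrak{Q}$.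
   Context: A unital quantale $(\mathfrak{Q},\&,e)$ is a complete lattice $\mathfrak{Q}$ with an associative binary operation $\&$ having unit $e$ and preserving arbitrary joins in each variable separately; throughout it is assumed non-trivial, i.e. $\bot<e$. The left and right implications $/$ and $\backslash$ are defined by $p\& q\le r\iff p\le r/ q\iff q\le p\backslash r$. $\mathfrak{Q}$ is integral if $e=\top$. $\mathfrak{Q}$ is divisible if whenever $u\le q$ one has $q\&(q\backslash u)=u=(u/ q)\& q$. For $p,q\in\mathfrak{Q}$, $\mathcal{D}\mathfrak{Q}(p,q)=\{u\in\mathfrak{Q}\mid (u/ p)\& p=u=q\&(q\backslash u)\}$ (the elements right-divisible by $p$ and left-divisible by $q$). *)

theory Defs
  imports Main
begin

definition unital_quantale :: "('a::complete_lattice \<Rightarrow> 'a \<Rightarrow> 'a) \<Rightarrow> 'a \<Rightarrow> bool" where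
  "unital_quantale mult e \<longleftrightarrow>
     (\<forall>a b c. mult (mult a b) c = mult a (mult b c)) \<and>
     (\<forall>a. mult e a = a \<and> mult a e = a) \<and>
     (\<forall>A b. mult (Sup A) b = (SUP a\<in>A. mult a b)) \<and>
     (\<forall>a B. mult a (Sup B) = (SUP b\<in>B. mult a b)) \<and>
     bot < e"

text \<open>Left implication r / q: p \<le> r / q iff mult p q \<le> r.\<close>
definition lres :: "('a::complete_lattice \<Rightarrow> 'a \<Rightarrow> 'a) \<Rightarrow> 'a \<Rightarrow> 'a \<Rightarrow> 'a" where
  "lres mult r q = Sup {p. mult p q \<le> r}"

text \<open>Right implication p \ r: q \<le> p \ r iff mult p q \<le> r.\<close>
definition rres :: "('a::complete_lattice \<Rightarrow> 'a \<Rightarrow> 'a) \<Rightarrow> 'a \<Rightarrow> 'a \<Rightarrow> 'a" where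
  "rres mult p r = Sup {q. mult p q \<le> r}"

definition integral :: "('a::complete_lattice \<Rightarrow> 'a \<Rightarrow> 'a) \<Rightarrow> 'a \<Rightarrow> bool" where
  "integral mult e \<longleftrightarrow> e = top"

definition divisible :: "('a::complete_lattice \<Rightarrow> 'a \<Rightarrow> 'a) \<Rightarrow> bool" where
  "divisible mult \<longleftrightarrow> (\<forall>u q. u \<le> q \<longrightarrow>
      mult q (rres mult q u) = u \<and> mult (lres mult u q) q = u)"

definition DQ :: "('a::complete_lattice \<Rightarrow> 'a \<Rightarrow> 'a) \<Rightarrow> 'a \<Rightarrow> 'a \<Rightarrow> 'a set" where
  "DQ mult p q = {u. mult (lres mult u p) p = u \<and> mult q (rres mult q u) = u}"

end

theory Submission
  imports Defs
begin

context
  fixes mult :: "'a::complete_lattice \<Rightarrow> 'a \<Rightarrow> 'a" and e :: 'a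
  assumes Q: "unital_quantale mult e"
begin

lemma assoc: "mult (mult a b) c = mult a (mult b c)"
  using Q unfolding unital_quantale_def by blast
lemma unitl: "mult e a = a" using Q unfolding unital_quantale_def by blast
lemma unitr: "mult a e = a" using Q unfolding unital_quantale_def by blast
lemma supl: "mult (Sup A) b = (SUP a\<in>A. mult a b)" using Q unfolding unital_quantale_def by blast
lemma supr: "mult a (Sup B) = (SUP b\<in>B. mult a b)" using Q unfolding unital_quantale_def by blast

lemma botl: "mult bot b = bot" using supl[of "{}" b] by simp
lemma botr: "mult b bot = bot" using supr[of b "{}"] by simp

lemma monol: "a \<le> a' \<Longrightarrow> mult a b \<le> mult a' b"
proof -
  assume "a \<le> a'"
  hence "Sup {a,a'} = a'" by (simp add: sup_absorb2)
  hence "mult a' b = sup (mult a b) (mult a' b)" using supl[of "{a,a'}" b] by simp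
  thus ?thesis by (metis sup_ge1)
qed
lemma monor: "b \<le> b' \<Longrightarrow> mult a b \<le> mult a b'"
proof -
  assume "b \<le> b'"
  hence "Sup {b,b'} = b'" by (simp add: sup_absorb2)
  hence "mult a b' = sup (mult a b) (mult a b')" using supr[of a "{b,b'}"] by simp
  thus ?thesis by (metis sup_ge1)
qed

lemma lres_iff: "p \<le> lres mult r q \<longleftrightarrow> mult p q \<le> r"
proof
  assume "p \<le> lres mult r q"
  hence "mult p q \<le> mult (lres mult r q) q" by (rule monol)
  also have "\<dots> \<le> r" unfolding lres_def supl by (auto intro: SUP_least)
  finally show "mult p q \<le> r" .
qed (auto simp: lres_def intro: Sup_upper)

lemma rres_iff: "q \<le> rres mult p r \<longleftrightarrow> mult p q \<le> r"
proof
  assume "q \<le> rres mult p r"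
  hence "mult p q \<le> mult p (rres mult p r)" by (rule monor)
  also have "\<dots> \<le> r" unfolding rres_def supr by (auto intro: SUP_least)
  finally show "mult p q \<le> r" .
qed (auto simp: rres_def intro: Sup_upper)

lemma lres_le: "mult (lres mult r q) q \<le> r" using lres_iff by blast
lemma rres_le: "mult p (rres mult p r) \<le> r" using rres_iff by blast

lemma self_DQ: "q \<in> DQ mult q q"
proof -
  have "e \<le> lres mult q q" using lres_iff unitl by simp
  hence "mult e q \<le> mult (lres mult q q) q" by (rule monol)
  hence 1: "mult (lres mult q q) q = q" using lres_le unitl by (metis antisym)
  have "e \<le> rres mult q q" using rres_iff unitr by simp
  hence "mult q e \<le> mult q (rres mult q q)" by (rule monor)
  hence "mult q (rres mult q q) = q" using rres_le unitr by (metis antisym)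
  with 1 show ?thesis by (simp add: DQ_def)
qed

lemma DQee: "DQ mult e e = UNIV"
proof -
  have "lres mult u e = u" for u
  proof (rule antisym)
    show "lres mult u e \<le> u" using lres_le[of u e] unitr by simp
    show "u \<le> lres mult u e" using lres_iff[of u u e] unitr by simp
  qed
  moreover have "rres mult e u = u" for u
  proof (rule antisym)
    show "rres mult e u \<le> u" using rres_le[of e u] unitl by simp
    show "u \<le> rres mult e u" using rres_iff[of u e u] unitl by simp
  qed
  ultimately show ?thesis by (auto simp: DQ_def unitl unitr)
qed

lemma bot_DQ: "bot \<in> DQ mult p q"
  using lres_le[of bot p] rres_le[of q bot] by (simp add: DQ_def bot_unique)

lemma topsq: "mult top top = top"
  using monol[of e top top] unitl by (simp add: top_unique)

lemma e_DQ: "e \<in> DQ mult top top \<longleftrightarrow> integral mult e"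
proof
  assume "e \<in> DQ mult top top"
  hence h: "mult (lres mult e top) top = e" by (simp add: DQ_def)
  have "e = mult (lres mult e top) (mult top top)" using h topsq by simp
  also have "\<dots> = mult e top" using h assoc by metis
  also have "\<dots> = top" by (simp add: unitl)
  finally show "integral mult e" by (simp add: integral_def)
next
  assume "integral mult e"
  hence et: "e = top" by (simp add: integral_def)
  have "lres mult top top = top" "rres mult top top = top"
    by (simp_all add: lres_def rres_def)
  thus "e \<in> DQ mult top top" using et topsq by (simp add: DQ_def)
qed

lemma int_iff: "integral mult e \<longleftrightarrow> (\<forall>p q. DQ mult p q \<subseteq> {u. u \<le> inf p q})"
proof
  assume "integral mult e"
  hence et: "e = top" by (simp add: integral_def)
  show "\<forall>p q. DQ mult p q \<subseteq> {u. u \<le> inf p q}"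
  proof (intro allI subsetI)
    fix p q u assume "u \<in> DQ mult p q"
    hence a: "mult (lres mult u p) p = u" and b: "mult q (rres mult q u) = u" by (auto simp: DQ_def)
    have "mult (lres mult u p) p \<le> mult e p" using et monol[of "lres mult u p" top p] by simp
    moreover have "mult q (rres mult q u) \<le> mult q e" using et monor[of "rres mult q u" top q] by simp
    ultimately have "u \<le> p" "u \<le> q" using a b unitl[of p] unitr[of q] by simp_all
    thus "u \<in> {u. u \<le> inf p q}" by simp
  qed
next
  assume "\<forall>p q. DQ mult p q \<subseteq> {u. u \<le> inf p q}"
  hence "DQ mult e e \<subseteq> {u. u \<le> inf e e}" by blast
  hence "top \<in> {u. u \<le> inf e e}" using DQee by blast
  hence "top \<le> e" by simp
  thus "integral mult e" by (simp add: integral_def top_unique)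
qed

lemma div_iff: "divisible mult \<longleftrightarrow> (\<forall>p q. DQ mult p q = {u. u \<le> inf p q})"
proof
  assume d: "divisible mult"
  hence "e \<in> DQ mult top top" by (simp add: divisible_def DQ_def)
  hence "integral mult e" using e_DQ by blast
  hence "\<forall>p q. DQ mult p q \<subseteq> {u. u \<le> inf p q}" using int_iff by blast
  moreover have "{u. u \<le> inf p q} \<subseteq> DQ mult p q" for p q
    using d by (auto simp: divisible_def DQ_def)
  ultimately show "\<forall>p q. DQ mult p q = {u. u \<le> inf p q}" by blast
next
  assume h: "\<forall>p q. DQ mult p q = {u. u \<le> inf p q}"
  show "divisible mult" unfolding divisible_def
  proof (intro allI impI)
    fix u q :: 'a assume "u \<le> q"
    hence "u \<in> DQ mult q q" using h by auto
    thus "mult q (rres mult q u) = u \<and> mult (lres mult u q) q = u" by (simp add: DQ_def)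
  qed
qed

lemma DQbot: "DQ mult bot q = {bot} \<and> DQ mult q bot = {bot}"
proof -
  have "DQ mult bot q \<subseteq> {bot}" by (auto simp: DQ_def botr)
  moreover have "DQ mult q bot \<subseteq> {bot}" by (auto simp: DQ_def botl)
  ultimately show ?thesis using bot_DQ by blast
qed

end

theorem lemma2p1:
  fixes mult :: "'a::complete_lattice \<Rightarrow> 'a \<Rightarrow> 'a" and e p q :: 'a
  assumes "unital_quantale mult e"
  shows "(DQ mult bot q = {bot} \<and> DQ mult q bot = {bot})
     \<and> DQ mult e e = UNIV
     \<and> q \<in> DQ mult q q
     \<and> bot \<in> DQ mult p q
     \<and> (e \<in> DQ mult top top \<longleftrightarrow> integral mult e)
     \<and> (integral mult e \<longleftrightarrow> (\<forall>p q. DQ mult p q \<subseteq> {u. u \<le> inf p q}))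
     \<and> (divisible mult \<longleftrightarrow> (\<forall>p q. DQ mult p q = {u. u \<le> inf p q}))"
  using DQbot[OF assms] DQee[OF assms] self_DQ[OF assms] bot_DQ[OF assms]
    e_DQ[OF assms] int_iff[OF assms] div_iff[OF assms] by blast

end
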